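(* Let $G$ be a finite Abelian group of order $n$, $H$ its Fourier matrix (rows and columns indexed by $G$), and $A$ an $n\times n$ flat matrix with rows $(R_i)_{i\in G}$ and columns $v_1,\dots,v_n$. For $r=1,\dots,n$ let $M_r=\frac1{\sqrt n}\operatorname{diag}(v_r)H$. Then $\{M_1,\dots,M_n\}$ is a complete system of mutually unbiased Hadamards if and only if for every nonzero $\Delta\in G$ the matrix $D_\Delta$ whose rows are $R_{i+\Delta}\circ R_i^{(-1)}$, $i\in G$, has pairwise orthogonal rows.
   Context: A flat matrix is a complex matrix all of whose entries have absolute value $1$. Writing $G=\mathbb{Z}_{d_1}\times\cdots\times\mathbb{Z}_{d_m}$, the Fourier matrix is $(\chi_j(i))_{i,j\in G}$ with $\chi_a(b)=\exp(\sum_j\frac{2\pi i}{d_j}a_jb_j)$. $\circ$ is the entrywise product and $R^{(-1)}$ the entrywise inverse. A complex Hadamard matrix is a unitary $n\times n$ matrix all of whose entries have absolute value $1/\sqrt n$; two are mutually unbiased if $|\langle x|y\rangle|=1/\sqrt n$ for every column $x$ of one and column $y$ of the other ($\langle x|y\rangle=\sum_t\overline{x_t}y_t$); a complete system of mutually unbiased Hadamards is a set of $n$ pairwise mutually unbiased complex Hadamard $n\times n$ matrices. *)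

theory Defs
  imports Complex_Main
begin

text \<open>The group G = Z_{d_1} x ... x Z_{d_m}, given by the list ds = [d_1,...,d_m];
  elements are lists a of length m with a!j < d_j.\<close>

definition grp :: "nat list \<Rightarrow> nat list set" where
  "grp ds = {a. length a = length ds \<and> (\<forall>j<length ds. a ! j < ds ! j)}"

definition gadd :: "nat list \<Rightarrow> nat list \<Rightarrow> nat list \<Rightarrow> nat list" where
  "gadd ds a b = map (\<lambda>j. (a ! j + b ! j) mod (ds ! j)) [0..<length ds]"

definition gzero :: "nat list \<Rightarrow> nat list" where
  "gzero ds = replicate (length ds) 0"

definition chr :: "nat list \<Rightarrow> nat list \<Rightarrow> nat list \<Rightarrow> complex" where
  "chr ds a b = exp (\<Sum>j<length ds. 2 * of_real pi * \<i> * of_nat (a ! j) * of_nat (b ! j) / of_nat (ds ! j))"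

definition fourier :: "nat list \<Rightarrow> nat list \<Rightarrow> nat list \<Rightarrow> complex" where
  "fourier ds i j = chr ds j i"

text \<open>Matrices indexed by a finite set I (rows and columns), as functions.\<close>
definition flat :: "'i set \<Rightarrow> ('i \<Rightarrow> 'i \<Rightarrow> complex) \<Rightarrow> bool" where
  "flat I A \<longleftrightarrow> (\<forall>i\<in>I. \<forall>j\<in>I. norm (A i j) = 1)"

definition braket :: "'i set \<Rightarrow> ('i \<Rightarrow> complex) \<Rightarrow> ('i \<Rightarrow> complex) \<Rightarrow> complex" where
  "braket I x y = (\<Sum>t\<in>I. cnj (x t) * y t)"

definition col :: "('i \<Rightarrow> 'i \<Rightarrow> complex) \<Rightarrow> 'i \<Rightarrow> 'i \<Rightarrow> complex" where
  "col M j = (\<lambda>i. M i j)"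

text \<open>Unitary: M^* M = I (for square matrices this is unitarity).\<close>
definition unitary_mat :: "'i set \<Rightarrow> ('i \<Rightarrow> 'i \<Rightarrow> complex) \<Rightarrow> bool" where
  "unitary_mat I M \<longleftrightarrow>
     (\<forall>j\<in>I. \<forall>k\<in>I. (\<Sum>i\<in>I. cnj (M i j) * M i k) = (if j = k then 1 else 0))"

definition complex_hadamard :: "'i set \<Rightarrow> ('i \<Rightarrow> 'i \<Rightarrow> complex) \<Rightarrow> bool" where
  "complex_hadamard I M \<longleftrightarrow> unitary_mat I M \<and>
     (\<forall>i\<in>I. \<forall>j\<in>I. norm (M i j) = 1 / sqrt (real (card I)))"

definition mutually_unbiased :: "'i set \<Rightarrow> ('i \<Rightarrow> 'i \<Rightarrow> complex) \<Rightarrow> ('i \<Rightarrow> 'i \<Rightarrow> complex) \<Rightarrow> bool" where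
  "mutually_unbiased I M N \<longleftrightarrow>
     (\<forall>j\<in>I. \<forall>k\<in>I. norm (braket I (col M j) (col N k)) = 1 / sqrt (real (card I)))"

definition complete_MUH :: "'i set \<Rightarrow> 'r set \<Rightarrow> ('r \<Rightarrow> 'i \<Rightarrow> 'i \<Rightarrow> complex) \<Rightarrow> bool" where
  "complete_MUH I R M \<longleftrightarrow> card R = card I \<and>
     (\<forall>r\<in>R. complex_hadamard I (M r)) \<and>
     (\<forall>r\<in>R. \<forall>s\<in>R. r \<noteq> s \<longrightarrow> mutually_unbiased I (M r) (M s))"

text \<open>M_r = (1/sqrt n) diag(v_r) H, where v_r is the r-th column of A.\<close>
definition Mmat :: "nat list \<Rightarrow> (nat list \<Rightarrow> nat list \<Rightarrow> complex) \<Rightarrow> nat list \<Rightarrow> nat list \<Rightarrow> nat list \<Rightarrow> complex" where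
  "Mmat ds A r i j = A i r * fourier ds i j / of_real (sqrt (real (card (grp ds))))"

definition Dmat :: "nat list \<Rightarrow> (nat list \<Rightarrow> nat list \<Rightarrow> complex) \<Rightarrow> nat list \<Rightarrow> nat list \<Rightarrow> nat list \<Rightarrow> complex" where
  "Dmat ds A \<Delta> i j = A (gadd ds i \<Delta>) j * inverse (A i j)"

definition orthogonal_rows :: "'i set \<Rightarrow> ('i \<Rightarrow> 'i \<Rightarrow> complex) \<Rightarrow> bool" where
  "orthogonal_rows I D \<longleftrightarrow>
     (\<forall>i\<in>I. \<forall>i'\<in>I. i \<noteq> i' \<longrightarrow> braket I (D i) (D i') = 0)"

end

theory Submission
  imports Defs "HOL-Analysis.Complex_Transcendental"
begin

lemma mod_cancel_aux: "(x + b) mod (d::nat) = (y + b) mod d \<Longrightarrow> x < d \<Longrightarrow> y < d \<Longrightarrow> x = y"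
proof -
  assume e: "(x + b) mod (d::nat) = (y + b) mod d" and xy: "x < d" "y < d"
  have "(int x + int b) mod int d = (int y + int b) mod int d"
    using e by (metis of_nat_add of_nat_mod)
  hence "((int x + int b) - int b) mod int d = ((int y + int b) - int b) mod int d"
    by (metis mod_diff_left_eq)
  hence "int x mod int d = int y mod int d" by simp
  thus ?thesis using xy by simp
qed

lemma grp_finite: "finite (grp ds)"
proof -
  have "grp ds \<subseteq> {xs. set xs \<subseteq> {..<Max (insert 0 (set ds))} \<and> length xs = length ds}"
  proof
    fix a assume "a \<in> grp ds"
    hence a: "length a = length ds" "\<forall>j<length ds. a ! j < ds ! j" by (auto simp: grp_def)
    have "set a \<subseteq> {..<Max (insert 0 (set ds))}"
    proof
      fix x assume "x \<in> set a"
      then obtain j where j: "j < length a" "a ! j = x" by (auto simp: in_set_conv_nth)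
      have "ds ! j \<in> set ds" using j a by auto
      hence "ds ! j \<le> Max (insert 0 (set ds))" by simp
      moreover have "x < ds ! j" using a j by auto
      ultimately show "x \<in> {..<Max (insert 0 (set ds))}" by simp
    qed
    thus "a \<in> {xs. set xs \<subseteq> {..<Max (insert 0 (set ds))} \<and> length xs = length ds}" using a by auto
  qed
  moreover have "finite {xs. set xs \<subseteq> {..<Max (insert 0 (set ds))} \<and> length xs = length ds}"
    by (rule finite_lists_length_eq) simp
  ultimately show ?thesis by (rule finite_subset)
qed

lemma gzero_in: "\<forall>d\<in>set ds. 0 < d \<Longrightarrow> gzero ds \<in> grp ds"
  by (auto simp: gzero_def grp_def)

lemma gadd_nth: "j < length ds \<Longrightarrow> gadd ds a b ! j = (a!j + b!j) mod (ds!j)"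
  by (simp add: gadd_def)

lemma gadd_in: "\<forall>d\<in>set ds. 0 < d \<Longrightarrow> gadd ds a b \<in> grp ds"
  by (auto simp: grp_def gadd_def)

lemma gadd_comm: "gadd ds a b = gadd ds b a"
  by (simp add: gadd_def add.commute)

lemma gadd_zero: "a \<in> grp ds \<Longrightarrow> gadd ds a (gzero ds) = a"
  by (auto simp: grp_def gadd_def gzero_def intro!: nth_equalityI)

lemma gadd_inj: "inj_on (\<lambda>a. gadd ds a b) (grp ds)"
proof (rule inj_onI)
  fix x y assume x: "x \<in> grp ds" and y: "y \<in> grp ds" and e: "gadd ds x b = gadd ds y b"
  show "x = y"
  proof (rule nth_equalityI)
    show "length x = length y" using x y by (simp add: grp_def)
    fix j assume "j < length x"
    hence j: "j < length ds" using x by (simp add: grp_def)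
    have "(x!j + b!j) mod (ds!j) = (y!j + b!j) mod (ds!j)" using e gadd_nth[OF j] by metis
    moreover have "x!j < ds!j" "y!j < ds!j" using x y j by (auto simp: grp_def)
    ultimately show "x!j = y!j" by (rule mod_cancel_aux)
  qed
qed

lemma gadd_bij: "\<forall>d\<in>set ds. 0 < d \<Longrightarrow> bij_betw (\<lambda>a. gadd ds a b) (grp ds) (grp ds)"
  apply (rule bij_betw_imageI[OF gadd_inj])
  apply (rule card_subset_eq[OF grp_finite])
  using gadd_in apply blast
  by (simp add: card_image[OF gadd_inj])

lemma gadd_bij': "\<forall>d\<in>set ds. 0 < d \<Longrightarrow> bij_betw (\<lambda>a. gadd ds b a) (grp ds) (grp ds)"
  using gadd_bij[of ds b] by (simp add: gadd_comm)


lemma exp_coord: 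
  assumes "(d::nat) > 0"
  shows "exp (2 * of_real pi * \<i> * of_nat c * of_nat ((x + y) mod d) / of_nat d) =
    exp (2 * of_real pi * \<i> * of_nat c * of_nat x / of_nat d) * exp (2 * of_real pi * \<i> * of_nat c * of_nat y / of_nat d)"
proof -
  define q where "q = (x + y) div d"
  have xy: "x + y = (x + y) mod d + d * q" by (simp add: q_def)
  have "2 * of_real pi * \<i> * of_nat c * of_nat x / of_nat d + 2 * of_real pi * \<i> * of_nat c * of_nat y / of_nat d
     = (2 * of_real pi * \<i> * of_nat c * of_nat (x + y) / of_nat d :: complex)"
    by (simp add: add_divide_distrib algebra_simps)
  also have "\<dots> = 2 * of_real pi * \<i> * of_nat c * of_nat ((x + y) mod d + d * q) / of_nat d"
    using xy by metis
  also have "\<dots> = 2 * of_real pi * \<i> * of_nat c * of_nat ((x + y) mod d) / of_nat d + of_nat (c * q) * (2 * of_real pi * \<i>)"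
    using assms by (simp add: field_simps)
  finally have "exp (2 * of_real pi * \<i> * of_nat c * of_nat x / of_nat d) * exp (2 * of_real pi * \<i> * of_nat c * of_nat y / of_nat d)
     = exp (2 * of_real pi * \<i> * of_nat c * of_nat ((x + y) mod d) / of_nat d) * exp (of_nat (c * q) * (2 * of_real pi * \<i>))"
    by (metis exp_add)
  also have "exp (of_nat (c * q) * (2 * of_real pi * \<i>)) = 1"
    by (simp only: exp_of_nat_mult exp_two_pi_i power_one)
  finally show ?thesis by simp
qed

lemma chr_prod: "chr ds a b = (\<Prod>j<length ds. exp (2 * of_real pi * \<i> * of_nat (a ! j) * of_nat (b ! j) / of_nat (ds ! j)))"
  unfolding chr_def by (simp add: exp_sum)

lemma chr_add:
  assumes "\<forall>d\<in>set ds. 0 < d"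
  shows "chr ds c (gadd ds a b) = chr ds c a * chr ds c b"
  unfolding chr_prod prod.distrib[symmetric]
  by (rule prod.cong[OF refl]) (use assms in \<open>auto simp: gadd_nth intro!: exp_coord\<close>)

lemma chr_sym: "chr ds a b = chr ds b a"
  unfolding chr_def by (simp add: mult_ac)

lemma chr_eq_cis: "chr ds a b = exp (\<i> * of_real (\<Sum>j<length ds. 2 * pi * real (a ! j) * real (b ! j) / real (ds ! j)))"
  unfolding chr_def by (simp add: sum_distrib_left mult_ac)

lemma chr_norm [simp]: "norm (chr ds a b) = 1"
  unfolding chr_eq_cis by (rule norm_exp_i_times)

lemma unit_cnj: "norm (z::complex) = 1 \<Longrightarrow> cnj z * z = 1"
  by (metis complex_norm_square mult.commute of_real_1 power_one)

lemma chr_cnj [simp]: "cnj (chr ds a b) * chr ds a b = 1"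
  by (simp add: unit_cnj)

lemma chr_cnj' [simp]: "chr ds a b * cnj (chr ds a b) = 1"
  by (metis chr_cnj mult.commute)

lemma chr_zero: "chr ds c (gzero ds) = 1"
  unfolding chr_prod by (simp add: gzero_def)

lemma chr_zero': "chr ds (gzero ds) c = 1"
  using chr_zero chr_sym by metis


lemma cis_ne_1:
  assumes "x < d" "y < d" "x \<noteq> y"
  shows "cnj (exp (\<i> * of_real (2 * pi * real x / real d))) * exp (\<i> * of_real (2 * pi * real y / real d)) \<noteq> 1"
proof
  assume h: "cnj (exp (\<i> * of_real (2 * pi * real x / real d))) * exp (\<i> * of_real (2 * pi * real y / real d)) = 1"
  have "cnj (exp (\<i> * of_real (2 * pi * real x / real d))) * exp (\<i> * of_real (2 * pi * real y / real d))
    = exp (\<i> * of_real (2 * pi * real y / real d - 2 * pi * real x / real d))"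
    by (simp add: exp_cnj exp_add[symmetric] algebra_simps)
  with h obtain n :: int where n: "2 * pi * real y / real d - 2 * pi * real x / real d = of_int (2 * n) * pi"
    by (auto simp: exp_eq_1)
  have d: "real d > 0" using assms by simp
  from n have "2 * pi * (real y - real x) = 2 * pi * (of_int n * real d)"
    using d by (simp add: field_simps)
  hence "real y - real x = of_int n * real d" by simp
  hence e: "int y - int x = n * int d"
    by (metis of_int_eq_iff of_int_mult of_int_diff of_int_of_nat_eq)
  show False
  proof (cases "n = 0")
    case True thus False using e assms by simp
  next
    case False
    hence "\<bar>n\<bar> \<ge> 1" by simp
    hence "\<bar>n\<bar> * int d \<ge> 1 * int d" by (intro mult_right_mono) auto
    hence "\<bar>n * int d\<bar> \<ge> int d" by (simp add: abs_mult)
    moreover have "\<bar>int y - int x\<bar> < int d" using assms by simp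
    ultimately show False using e by simp
  qed
qed

lemma chr_orth:
  assumes pos: "\<forall>d\<in>set ds. 0 < d" and a: "a \<in> grp ds" and b: "b \<in> grp ds"
  shows "(\<Sum>i\<in>grp ds. cnj (chr ds a i) * chr ds b i) = (if a = b then of_nat (card (grp ds)) else 0)"
proof (cases "a = b")
  case True thus ?thesis by simp
next
  case False
  define I where "I = grp ds"
  define g where "g i = cnj (chr ds a i) * chr ds b i" for i
  have la: "length a = length ds" and lb: "length b = length ds" using a b by (auto simp: grp_def)
  obtain j where j: "j < length ds" "a ! j \<noteq> b ! j"
    using False la lb nth_equalityI by metis
  have ab: "a ! j < ds ! j" "b ! j < ds ! j" using a b j by (auto simp: grp_def)
  define e where "e = (gzero ds)[j := 1]"
  have e_nth: "e ! l = (if l = j then 1 else 0)" if "l < length ds" for l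
    using that j by (simp add: e_def gzero_def nth_list_update)
  have eI: "e \<in> I" using j ab pos by (auto simp: e_def gzero_def grp_def I_def nth_list_update)
  have chre: "chr ds c e = exp (\<i> * of_real (2 * pi * real (c ! j) / real (ds ! j)))" for c
  proof -
    have "chr ds c e = (\<Prod>l<length ds. if l = j then exp (2 * of_real pi * \<i> * of_nat (c ! j) / of_nat (ds ! j)) else 1)"
      unfolding chr_prod by (rule prod.cong[OF refl]) (simp add: e_nth)
    also have "\<dots> = exp (2 * of_real pi * \<i> * of_nat (c ! j) / of_nat (ds ! j))"
      using j by (simp add: prod.delta)
    finally show ?thesis by (simp add: mult_ac)
  qed
  have ge: "g e \<noteq> 1" unfolding g_def chre using cis_ne_1[OF ab j(2)] .
  have gadd: "g (gadd ds i e) = g i * g e" for i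
    unfolding g_def chr_add[OF pos] by (simp add: mult_ac)
  have "sum g I = sum (\<lambda>i. g (gadd ds i e)) I"
    using sum.reindex_bij_betw[OF gadd_bij[OF pos, of e], of g] unfolding I_def by simp
  also have "\<dots> = sum g I * g e" by (simp add: gadd sum_distrib_right)
  finally have "sum g I * (1 - g e) = 0" by (simp add: algebra_simps)
  hence "sum g I = 0" using ge by simp
  thus ?thesis using False unfolding g_def I_def by simp
qed


lemma frob_swap:
  fixes E :: "'i \<Rightarrow> 'i \<Rightarrow> complex"
  shows "(\<Sum>i\<in>I. \<Sum>i'\<in>I. (\<Sum>t\<in>I. cnj (E i t) * E i' t) * cnj (\<Sum>t\<in>I. cnj (E i t) * E i' t))
       = (\<Sum>r\<in>I. \<Sum>s\<in>I. (\<Sum>i\<in>I. cnj (E i r) * E i s) * cnj (\<Sum>i\<in>I. cnj (E i r) * E i s))"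
proof -
  have "(\<Sum>i\<in>I. \<Sum>i'\<in>I. (\<Sum>t\<in>I. cnj (E i t) * E i' t) * cnj (\<Sum>t\<in>I. cnj (E i t) * E i' t))
      = (\<Sum>i\<in>I. \<Sum>i'\<in>I. \<Sum>t\<in>I. \<Sum>t'\<in>I. cnj (E i t) * E i' t * (E i t' * cnj (E i' t')))"
    by (simp only: cnj_sum sum_product complex_cnj_mult complex_cnj_cnj)
  also have "\<dots> = (\<Sum>i\<in>I. \<Sum>t\<in>I. \<Sum>i'\<in>I. \<Sum>t'\<in>I. cnj (E i t) * E i' t * (E i t' * cnj (E i' t')))"
    by (rule sum.cong[OF refl], rule sum.swap)
  also have "\<dots> = (\<Sum>t\<in>I. \<Sum>i\<in>I. \<Sum>i'\<in>I. \<Sum>t'\<in>I. cnj (E i t) * E i' t * (E i t' * cnj (E i' t')))"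
    by (rule sum.swap)
  also have "\<dots> = (\<Sum>t\<in>I. \<Sum>i\<in>I. \<Sum>t'\<in>I. \<Sum>i'\<in>I. cnj (E i t) * E i' t * (E i t' * cnj (E i' t')))"
    by (rule sum.cong[OF refl], rule sum.cong[OF refl], rule sum.swap)
  also have "\<dots> = (\<Sum>t\<in>I. \<Sum>t'\<in>I. \<Sum>i\<in>I. \<Sum>i'\<in>I. cnj (E i t) * E i' t * (E i t' * cnj (E i' t')))"
    by (rule sum.cong[OF refl], rule sum.swap)
  also have "\<dots> = (\<Sum>t\<in>I. \<Sum>t'\<in>I. \<Sum>i\<in>I. \<Sum>i'\<in>I. (cnj (E i t) * E i t') * (E i' t * cnj (E i' t')))"
    by (intro sum.cong refl) (simp add: mult_ac)
  also have "\<dots> = (\<Sum>t\<in>I. \<Sum>t'\<in>I. (\<Sum>i\<in>I. cnj (E i t) * E i t') * (\<Sum>i'\<in>I. E i' t * cnj (E i' t')))"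
    by (simp only: sum_product)
  also have "\<dots> = (\<Sum>r\<in>I. \<Sum>s\<in>I. (\<Sum>i\<in>I. cnj (E i r) * E i s) * cnj (\<Sum>i\<in>I. cnj (E i r) * E i s))"
    by (simp only: cnj_sum complex_cnj_mult complex_cnj_cnj)
  finally show ?thesis .
qed

lemma offdiag:
  fixes X :: "'i \<Rightarrow> 'i \<Rightarrow> complex"
  assumes "finite I" "\<forall>i\<in>I. X i i = c"
  shows "(\<Sum>i\<in>I. \<Sum>i'\<in>I. X i i' * cnj (X i i')) =
     of_real (real (card I) * (norm c)^2 + (\<Sum>i\<in>I. \<Sum>i'\<in>I-{i}. (norm (X i i'))^2))"
proof -
  have "(\<Sum>i\<in>I. \<Sum>i'\<in>I. X i i' * cnj (X i i')) = (\<Sum>i\<in>I. \<Sum>i'\<in>I. of_real ((norm (X i i'))^2))"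
    by (simp only: complex_norm_square)
  also have "\<dots> = of_real (\<Sum>i\<in>I. \<Sum>i'\<in>I. (norm (X i i'))^2)" by simp
  also have "(\<Sum>i\<in>I. \<Sum>i'\<in>I. (norm (X i i'))^2) = (\<Sum>i\<in>I. (norm c)^2 + (\<Sum>i'\<in>I-{i}. (norm (X i i'))^2))"
    by (rule sum.cong[OF refl]) (use assms in \<open>simp add: sum.remove\<close>)
  also have "\<dots> = real (card I) * (norm c)^2 + (\<Sum>i\<in>I. \<Sum>i'\<in>I-{i}. (norm (X i i'))^2)"
    by (simp add: sum.distrib)
  finally show ?thesis .
qed

lemma offdiag_zero:
  fixes X :: "'i \<Rightarrow> 'i \<Rightarrow> complex"
  assumes fin: "finite I"
  shows "(\<Sum>i\<in>I. \<Sum>i'\<in>I-{i}. (norm (X i i'))^2) = 0 \<longleftrightarrow> (\<forall>i\<in>I. \<forall>i'\<in>I. i \<noteq> i' \<longrightarrow> X i i' = 0)"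
proof -
  have "(\<Sum>i\<in>I. \<Sum>i'\<in>I-{i}. (norm (X i i'))^2) = 0 \<longleftrightarrow> (\<forall>i\<in>I. (\<Sum>i'\<in>I-{i}. (norm (X i i'))^2) = 0)"
    by (rule sum_nonneg_eq_0_iff) (use fin in \<open>auto intro: sum_nonneg\<close>)
  also have "\<dots> \<longleftrightarrow> (\<forall>i\<in>I. \<forall>i'\<in>I-{i}. (norm (X i i'))^2 = 0)"
  proof -
    have "(\<Sum>i'\<in>I-{i}. (norm (X i i'))^2) = 0 \<longleftrightarrow> (\<forall>i'\<in>I-{i}. (norm (X i i'))^2 = 0)" for i
      by (rule sum_nonneg_eq_0_iff) (use fin in auto)
    thus ?thesis by blast
  qed
  also have "\<dots> \<longleftrightarrow> (\<forall>i\<in>I. \<forall>i'\<in>I. i \<noteq> i' \<longrightarrow> X i i' = 0)"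
    by auto
  finally show ?thesis .
qed

lemma rows_cols:
  fixes E :: "'i \<Rightarrow> 'i \<Rightarrow> complex"
  assumes fin: "finite I" and fl: "\<forall>i\<in>I. \<forall>j\<in>I. norm (E i j) = 1"
  shows "(\<forall>r\<in>I. \<forall>s\<in>I. r \<noteq> s \<longrightarrow> (\<Sum>i\<in>I. cnj (E i r) * E i s) = 0) \<longleftrightarrow>
         (\<forall>i\<in>I. \<forall>i'\<in>I. i \<noteq> i' \<longrightarrow> (\<Sum>t\<in>I. cnj (E i t) * E i' t) = 0)"
proof -
  define P where "P i i' = (\<Sum>t\<in>I. cnj (E i t) * E i' t)" for i i'
  define Q where "Q r s = (\<Sum>i\<in>I. cnj (E i r) * E i s)" for r s
  have Pd: "\<forall>i\<in>I. P i i = of_nat (card I)"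
  proof
    fix i assume i: "i \<in> I"
    have "P i i = (\<Sum>t\<in>I. 1)" unfolding P_def by (rule sum.cong[OF refl]) (use fl i in \<open>simp add: unit_cnj\<close>)
    thus "P i i = of_nat (card I)" by simp
  qed
  have Qd: "\<forall>i\<in>I. Q i i = of_nat (card I)"
  proof
    fix i assume i: "i \<in> I"
    have "Q i i = (\<Sum>t\<in>I. 1)" unfolding Q_def by (rule sum.cong[OF refl]) (use fl i in \<open>simp add: unit_cnj\<close>)
    thus "Q i i = of_nat (card I)" by simp
  qed
  have "of_real (real (card I) * (norm (of_nat (card I) :: complex))^2 + (\<Sum>i\<in>I. \<Sum>i'\<in>I-{i}. (norm (P i i'))^2))
      = (of_real (real (card I) * (norm (of_nat (card I) :: complex))^2 + (\<Sum>i\<in>I. \<Sum>i'\<in>I-{i}. (norm (Q i i'))^2)) :: complex)"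
    using frob_swap[where I=I and E=E] unfolding P_def[symmetric] Q_def[symmetric]
    unfolding offdiag[where X=P, OF fin Pd] offdiag[where X=Q, OF fin Qd] .
  hence "(\<Sum>i\<in>I. \<Sum>i'\<in>I-{i}. (norm (P i i'))^2) = (\<Sum>i\<in>I. \<Sum>i'\<in>I-{i}. (norm (Q i i'))^2)"
    by (simp only: of_real_eq_iff add_left_cancel)
  hence "(\<forall>i\<in>I. \<forall>i'\<in>I. i \<noteq> i' \<longrightarrow> Q i i' = 0) \<longleftrightarrow> (\<forall>i\<in>I. \<forall>i'\<in>I. i \<noteq> i' \<longrightarrow> P i i' = 0)"
    by (simp only: offdiag_zero[OF fin, symmetric])
  thus ?thesis by (simp only: P_def Q_def)
qed


lemma unit_inverse: "norm (z::complex) = 1 \<Longrightarrow> inverse z = cnj z"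
  by (rule inverse_unique) (metis unit_cnj mult.commute)

lemma card_grp_pos: "\<forall>d\<in>set ds. 0 < d \<Longrightarrow> card (grp ds) > 0"
  unfolding card_gt_0_iff using grp_finite gzero_in by auto

lemma sqrt_sq_c: "(of_real (sqrt (real n)) :: complex) * of_real (sqrt (real n)) = of_nat n"
proof -
  have "(of_real (sqrt (real n)) :: complex) * of_real (sqrt (real n)) = of_real (sqrt (real n) * sqrt (real n))"
    by (simp only: of_real_mult)
  also have "sqrt (real n) * sqrt (real n) = real n" by simp
  finally show ?thesis by simp
qed

lemma Mmat_norm:
  assumes "flat (grp ds) A" "i \<in> grp ds" "r \<in> grp ds"
  shows "norm (Mmat ds A r i j) = 1 / sqrt (real (card (grp ds)))"
proof -
  have "norm (A i r) = 1" using assms by (simp add: flat_def)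
  thus ?thesis by (simp add: Mmat_def fourier_def norm_divide norm_mult)
qed

lemma Mmat_prod:
  assumes "flat (grp ds) A" "i \<in> grp ds" "r \<in> grp ds" "s \<in> grp ds"
  shows "cnj (Mmat ds A r i j) * Mmat ds A s i k =
     (cnj (A i r) * A i s) * (cnj (chr ds j i) * chr ds k i) / of_nat (card (grp ds))"
proof -
  let ?s = "of_real (sqrt (real (card (grp ds)))) :: complex"
  have "cnj (Mmat ds A r i j) * Mmat ds A s i k =
     (cnj (A i r) * A i s) * (cnj (chr ds j i) * chr ds k i) / (?s * ?s)"
    by (simp add: Mmat_def fourier_def mult_ac)
  thus ?thesis by (simp only: sqrt_sq_c)
qed

lemma hadamard_all:
  assumes pos: "\<forall>d\<in>set ds. 0 < d" and fl: "flat (grp ds) A" and r: "r \<in> grp ds"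
  shows "complex_hadamard (grp ds) (Mmat ds A r)"
  unfolding complex_hadamard_def unitary_mat_def
proof (intro conjI ballI)
  fix i j assume "i \<in> grp ds" "j \<in> grp ds"
  thus "norm (Mmat ds A r i j) = 1 / sqrt (real (card (grp ds)))" using Mmat_norm fl r by blast
next
  fix j k assume j: "j \<in> grp ds" and k: "k \<in> grp ds"
  have "(\<Sum>i\<in>grp ds. cnj (Mmat ds A r i j) * Mmat ds A r i k) =
        (\<Sum>i\<in>grp ds. (cnj (chr ds j i) * chr ds k i) / of_nat (card (grp ds)))"
    by (rule sum.cong[OF refl]) (use fl r in \<open>simp add: Mmat_prod flat_def unit_cnj\<close>)
  also have "\<dots> = (\<Sum>i\<in>grp ds. cnj (chr ds j i) * chr ds k i) / of_nat (card (grp ds))"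
    by (simp add: sum_divide_distrib)
  also have "\<dots> = (if j = k then 1 else 0)"
    using chr_orth[OF pos j k] card_grp_pos[OF pos] by simp
  finally show "(\<Sum>i\<in>grp ds. cnj (Mmat ds A r i j) * Mmat ds A r i k) = (if j = k then 1 else 0)" .
qed


lemma norm_div_iff:
  assumes "n > 0"
  shows "norm (z / of_nat n :: complex) = 1 / sqrt (real n) \<longleftrightarrow> z * cnj z = of_nat n"
proof -
  have sn: "sqrt (real n) > 0" using assms by simp
  have N: "real n > 0" using assms by simp
  have qq: "sqrt (real n) * sqrt (real n) = real n" by simp
  have "norm (z / of_nat n) = norm z / real n" by (simp add: norm_divide)
  hence "norm (z / of_nat n :: complex) = 1 / sqrt (real n) \<longleftrightarrow> norm z / real n = 1 / sqrt (real n)"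
    by simp
  also have "\<dots> \<longleftrightarrow> norm z * sqrt (real n) = real n"
    using N sn by (simp add: divide_eq_eq eq_divide_eq field_simps)
  also have "\<dots> \<longleftrightarrow> norm z * sqrt (real n) = sqrt (real n) * sqrt (real n)" by (simp only: qq)
  also have "\<dots> \<longleftrightarrow> norm z = sqrt (real n)" by (rule mult_right_cancel) (use sn in simp)
  also have "norm z = sqrt (real n) \<longleftrightarrow> (norm z)^2 = real n"
    using real_sqrt_unique sqrt_le_D by fastforce 
  also have "\<dots> \<longleftrightarrow> (of_real ((norm z)^2) :: complex) = of_real (real n)"
    by (simp only: of_real_eq_iff)
  also have "\<dots> \<longleftrightarrow> z * cnj z = of_nat n"
    by (simp only: complex_norm_square of_real_of_nat_eq)
  finally show ?thesis .
qed


lemma Tsq: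
  assumes pos: "\<forall>d\<in>set ds. 0 < d"
  shows "(\<Sum>i\<in>grp ds. w i * (cnj (chr ds j i) * chr ds k i)) * cnj (\<Sum>i\<in>grp ds. w i * (cnj (chr ds j i) * chr ds k i))
     = (\<Sum>\<Delta>\<in>grp ds. cnj (chr ds j \<Delta>) * chr ds k \<Delta> * (\<Sum>i\<in>grp ds. w (gadd ds i \<Delta>) * cnj (w i)))"
proof -
  let ?I = "grp ds"
  define G where "G i i' = (w i * (cnj (chr ds j i) * chr ds k i)) * cnj (w i' * (cnj (chr ds j i') * chr ds k i'))" for i i'
  have "(\<Sum>i\<in>?I. w i * (cnj (chr ds j i) * chr ds k i)) * cnj (\<Sum>i\<in>?I. w i * (cnj (chr ds j i) * chr ds k i))
      = (\<Sum>i\<in>?I. \<Sum>i'\<in>?I. G i i')"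
    unfolding G_def cnj_sum by (rule sum_product)
  also have "\<dots> = (\<Sum>i'\<in>?I. \<Sum>i\<in>?I. G i i')" by (rule sum.swap)
  also have "\<dots> = (\<Sum>i'\<in>?I. \<Sum>\<Delta>\<in>?I. G (gadd ds i' \<Delta>) i')"
  proof (rule sum.cong[OF refl])
    fix i' show "(\<Sum>i\<in>?I. G i i') = (\<Sum>\<Delta>\<in>?I. G (gadd ds i' \<Delta>) i')"
      using sum.reindex_bij_betw[OF gadd_bij'[OF pos, of i'], of "\<lambda>i. G i i'"] by simp
  qed
  also have "\<dots> = (\<Sum>i'\<in>?I. \<Sum>\<Delta>\<in>?I. cnj (chr ds j \<Delta>) * chr ds k \<Delta> * (w (gadd ds i' \<Delta>) * cnj (w i')))"
  proof (intro sum.cong refl)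
    fix i' \<Delta>
    have "G (gadd ds i' \<Delta>) i' = (cnj (chr ds j i') * chr ds j i') * (chr ds k i' * cnj (chr ds k i')) *
        (cnj (chr ds j \<Delta>) * chr ds k \<Delta> * (w (gadd ds i' \<Delta>) * cnj (w i')))"
      unfolding G_def chr_add[OF pos] by (simp only: complex_cnj_mult complex_cnj_cnj mult_ac)
    thus "G (gadd ds i' \<Delta>) i' = cnj (chr ds j \<Delta>) * chr ds k \<Delta> * (w (gadd ds i' \<Delta>) * cnj (w i'))"
      by simp
  qed
  also have "\<dots> = (\<Sum>\<Delta>\<in>?I. \<Sum>i'\<in>?I. cnj (chr ds j \<Delta>) * chr ds k \<Delta> * (w (gadd ds i' \<Delta>) * cnj (w i')))"
    by (rule sum.swap)
  also have "\<dots> = (\<Sum>\<Delta>\<in>?I. cnj (chr ds j \<Delta>) * chr ds k \<Delta> * (\<Sum>i\<in>?I. w (gadd ds i \<Delta>) * cnj (w i)))"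
    by (simp add: sum_distrib_left)
  finally show ?thesis .
qed


lemma Q_iff:
  assumes pos: "\<forall>d\<in>set ds. 0 < d" and ac0: "ac (gzero ds) = of_nat (card (grp ds))"
  shows "(\<forall>j\<in>grp ds. \<forall>k\<in>grp ds. (\<Sum>\<Delta>\<in>grp ds. cnj (chr ds j \<Delta>) * chr ds k \<Delta> * ac \<Delta>) = of_nat (card (grp ds)))
     \<longleftrightarrow> (\<forall>\<Delta>\<in>grp ds. \<Delta> \<noteq> gzero ds \<longrightarrow> ac \<Delta> = 0)"
proof
  let ?I = "grp ds" and ?n = "of_nat (card (grp ds)) :: complex"
  have z: "gzero ds \<in> ?I" using gzero_in[OF pos] .
  have fin: "finite ?I" by (rule grp_finite)
  have n0: "?n \<noteq> 0" using card_grp_pos[OF pos] by simp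
  assume h: "\<forall>j\<in>?I. \<forall>k\<in>?I. (\<Sum>\<Delta>\<in>?I. cnj (chr ds j \<Delta>) * chr ds k \<Delta> * ac \<Delta>) = ?n"
  show "\<forall>\<Delta>\<in>?I. \<Delta> \<noteq> gzero ds \<longrightarrow> ac \<Delta> = 0"
  proof (intro ballI impI)
    fix D0 assume D0: "D0 \<in> ?I" "D0 \<noteq> gzero ds"
    have hk: "(\<Sum>\<Delta>\<in>?I. chr ds k \<Delta> * ac \<Delta>) = ?n" if "k \<in> ?I" for k
    proof -
      have "(\<Sum>\<Delta>\<in>?I. cnj (chr ds (gzero ds) \<Delta>) * chr ds k \<Delta> * ac \<Delta>) = ?n"
        using h z that by blast
      thus ?thesis by (simp add: chr_zero')
    qed
    have "(\<Sum>k\<in>?I. cnj (chr ds k D0) * (\<Sum>\<Delta>\<in>?I. chr ds k \<Delta> * ac \<Delta>)) = (\<Sum>k\<in>?I. cnj (chr ds D0 k) * chr ds (gzero ds) k) * ?n"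
      by (simp add: hk sum_distrib_right chr_zero' chr_sym[of ds _ D0])
    also have "\<dots> = 0" using chr_orth[OF pos D0(1) z] D0(2) by simp
    finally have l: "(\<Sum>k\<in>?I. cnj (chr ds k D0) * (\<Sum>\<Delta>\<in>?I. chr ds k \<Delta> * ac \<Delta>)) = 0" .
    have "(\<Sum>k\<in>?I. cnj (chr ds k D0) * (\<Sum>\<Delta>\<in>?I. chr ds k \<Delta> * ac \<Delta>))
        = (\<Sum>k\<in>?I. \<Sum>\<Delta>\<in>?I. ac \<Delta> * (cnj (chr ds D0 k) * chr ds \<Delta> k))"
      unfolding sum_distrib_left
    proof (intro sum.cong refl)
      fix k \<Delta>
      show "cnj (chr ds k D0) * (chr ds k \<Delta> * ac \<Delta>) = ac \<Delta> * (cnj (chr ds D0 k) * chr ds \<Delta> k)"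
        by (simp only: chr_sym[of ds k D0] chr_sym[of ds k \<Delta>] mult_ac)
    qed
    also have "\<dots> = (\<Sum>\<Delta>\<in>?I. ac \<Delta> * (\<Sum>k\<in>?I. cnj (chr ds D0 k) * chr ds \<Delta> k))"
      by (subst sum.swap) (simp add: sum_distrib_left)
    also have "\<dots> = (\<Sum>\<Delta>\<in>?I. if D0 = \<Delta> then ac \<Delta> * ?n else 0)"
      by (rule sum.cong[OF refl]) (simp add: chr_orth[OF pos D0(1)])
    also have "\<dots> = ac D0 * ?n" using D0(1) fin by simp
    finally show "ac D0 = 0" using l n0 by simp
  qed
next
  let ?I = "grp ds" and ?n = "of_nat (card (grp ds)) :: complex"
  have z: "gzero ds \<in> ?I" using gzero_in[OF pos] .
  have fin: "finite ?I" by (rule grp_finite)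
  assume h: "\<forall>\<Delta>\<in>?I. \<Delta> \<noteq> gzero ds \<longrightarrow> ac \<Delta> = 0"
  show "\<forall>j\<in>?I. \<forall>k\<in>?I. (\<Sum>\<Delta>\<in>?I. cnj (chr ds j \<Delta>) * chr ds k \<Delta> * ac \<Delta>) = ?n"
  proof (intro ballI)
    fix j k
    have "(\<Sum>\<Delta>\<in>?I. cnj (chr ds j \<Delta>) * chr ds k \<Delta> * ac \<Delta>) = (\<Sum>\<Delta>\<in>?I. if \<Delta> = gzero ds then ?n else 0)"
      by (rule sum.cong[OF refl]) (use h ac0 in \<open>simp add: chr_zero\<close>)
    also have "\<dots> = ?n" using z fin by simp
    finally show "(\<Sum>\<Delta>\<in>?I. cnj (chr ds j \<Delta>) * chr ds k \<Delta> * ac \<Delta>) = ?n" .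
  qed
qed


lemma unit_cnj': "norm (z::complex) = 1 \<Longrightarrow> z * cnj z = 1"
  by (metis unit_cnj mult.commute)

lemma MU_iff:
  assumes pos: "\<forall>d\<in>set ds. 0 < d" and fl: "flat (grp ds) A" and r: "r \<in> grp ds" and s: "s \<in> grp ds"
  shows "mutually_unbiased (grp ds) (Mmat ds A r) (Mmat ds A s) \<longleftrightarrow>
    (\<forall>\<Delta>\<in>grp ds. \<Delta> \<noteq> gzero ds \<longrightarrow> (\<Sum>i\<in>grp ds. cnj (Dmat ds A \<Delta> i r) * Dmat ds A \<Delta> i s) = 0)"
proof -
  let ?I = "grp ds" and ?n = "card (grp ds)"
  define w where "w i = cnj (A i r) * A i s" for i
  define T where "T j k = (\<Sum>i\<in>?I. w i * (cnj (chr ds j i) * chr ds k i))" for j k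
  define ac where "ac \<Delta> = (\<Sum>i\<in>?I. w (gadd ds i \<Delta>) * cnj (w i))" for \<Delta>
  have flA: "norm (A i j) = 1" if "i \<in> ?I" "j \<in> ?I" for i j using fl that by (simp add: flat_def)
  have br: "braket ?I (col (Mmat ds A r) j) (col (Mmat ds A s) k) = T j k / of_nat ?n" for j k
    unfolding braket_def col_def T_def sum_divide_distrib
    by (rule sum.cong[OF refl]) (simp add: Mmat_prod[OF fl _ r s] w_def)
  have "mutually_unbiased ?I (Mmat ds A r) (Mmat ds A s) \<longleftrightarrow>
      (\<forall>j\<in>?I. \<forall>k\<in>?I. T j k * cnj (T j k) = of_nat ?n)"
    unfolding mutually_unbiased_def br norm_div_iff[OF card_grp_pos[OF pos]] ..
  also have "\<dots> \<longleftrightarrow> (\<forall>j\<in>?I. \<forall>k\<in>?I. (\<Sum>\<Delta>\<in>?I. cnj (chr ds j \<Delta>) * chr ds k \<Delta> * ac \<Delta>) = of_nat ?n)"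
    unfolding T_def ac_def Tsq[OF pos] ..
  also have "\<dots> \<longleftrightarrow> (\<forall>\<Delta>\<in>?I. \<Delta> \<noteq> gzero ds \<longrightarrow> ac \<Delta> = 0)"
  proof (rule Q_iff[OF pos])
    have "ac (gzero ds) = (\<Sum>i\<in>?I. 1)"
      unfolding ac_def
    proof (rule sum.cong[OF refl])
      fix i assume i: "i \<in> ?I"
      have "w i * cnj (w i) = (cnj (A i r) * A i r) * (A i s * cnj (A i s))"
        by (simp add: w_def mult_ac)
      thus "w (gadd ds i (gzero ds)) * cnj (w i) = 1"
        using i r s flA by (simp add: gadd_zero unit_cnj unit_cnj')
    qed
    thus "ac (gzero ds) = of_nat ?n" by simp
  qed
  also have "\<dots> \<longleftrightarrow> (\<forall>\<Delta>\<in>?I. \<Delta> \<noteq> gzero ds \<longrightarrow> (\<Sum>i\<in>?I. cnj (Dmat ds A \<Delta> i r) * Dmat ds A \<Delta> i s) = 0)"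
  proof -
    have "ac \<Delta> = (\<Sum>i\<in>?I. cnj (Dmat ds A \<Delta> i r) * Dmat ds A \<Delta> i s)" if D: "\<Delta> \<in> ?I" for \<Delta>
      unfolding ac_def
    proof (rule sum.cong[OF refl])
      fix i assume i: "i \<in> ?I"
      have g: "gadd ds i \<Delta> \<in> ?I" using gadd_in[OF pos] .
      show "w (gadd ds i \<Delta>) * cnj (w i) = cnj (Dmat ds A \<Delta> i r) * Dmat ds A \<Delta> i s"
        unfolding Dmat_def w_def using flA[OF i r] flA[OF i s]
        by (simp add: unit_inverse mult_ac)
    qed
    thus ?thesis by auto
  qed
  finally show ?thesis .
qed


theorem mainTheorem13:
  fixes ds :: "nat list" and A :: "nat list \<Rightarrow> nat list \<Rightarrow> complex"
  assumes "\<forall>d\<in>set ds. 0 < d"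
    and "flat (grp ds) A"
  shows "complete_MUH (grp ds) (grp ds) (Mmat ds A) \<longleftrightarrow>
    (\<forall>\<Delta>\<in>grp ds. \<Delta> \<noteq> gzero ds \<longrightarrow> orthogonal_rows (grp ds) (Dmat ds A \<Delta>))"
proof -
  note pos = assms(1) and fl = assms(2)
  let ?I = "grp ds"
  have "complete_MUH ?I ?I (Mmat ds A) \<longleftrightarrow> (\<forall>r\<in>?I. \<forall>s\<in>?I. r \<noteq> s \<longrightarrow> mutually_unbiased ?I (Mmat ds A r) (Mmat ds A s))"
    unfolding complete_MUH_def using hadamard_all[OF pos fl] by auto
  also have "\<dots> \<longleftrightarrow> (\<forall>r\<in>?I. \<forall>s\<in>?I. r \<noteq> s \<longrightarrow>
      (\<forall>\<Delta>\<in>?I. \<Delta> \<noteq> gzero ds \<longrightarrow> (\<Sum>i\<in>?I. cnj (Dmat ds A \<Delta> i r) * Dmat ds A \<Delta> i s) = 0))"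
    using MU_iff[OF pos fl] by auto
  also have "\<dots> \<longleftrightarrow> (\<forall>\<Delta>\<in>?I. \<Delta> \<noteq> gzero ds \<longrightarrow>
      (\<forall>r\<in>?I. \<forall>s\<in>?I. r \<noteq> s \<longrightarrow> (\<Sum>i\<in>?I. cnj (Dmat ds A \<Delta> i r) * Dmat ds A \<Delta> i s) = 0))"
    by blast
  also have "\<dots> \<longleftrightarrow> (\<forall>\<Delta>\<in>?I. \<Delta> \<noteq> gzero ds \<longrightarrow> orthogonal_rows ?I (Dmat ds A \<Delta>))"
  proof -
    have "(\<forall>r\<in>?I. \<forall>s\<in>?I. r \<noteq> s \<longrightarrow> (\<Sum>i\<in>?I. cnj (Dmat ds A \<Delta> i r) * Dmat ds A \<Delta> i s) = 0)
        \<longleftrightarrow> orthogonal_rows ?I (Dmat ds A \<Delta>)" for \<Delta>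
    proof -
      have "\<forall>i\<in>?I. \<forall>j\<in>?I. norm (Dmat ds A \<Delta> i j) = 1"
        using fl gadd_in[OF pos] by (simp add: flat_def Dmat_def norm_mult norm_inverse)
      from rows_cols[OF grp_finite this] show ?thesis
        unfolding orthogonal_rows_def braket_def .
    qed
    thus ?thesis by auto
  qed
  finally show ?thesis .
qed


end
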